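(* Let $\mathcal{D}=\{D_1,\ldots,D_N\}$ be a finite set of closed disks in the plane, $D_i$ having center $c_i$ and radius $\rho_i\ge 0$, and consider its Apollonius diagram. Let $p$ and $q$ be two points on an Apollonius edge of the cell $A_i$ of $D_i$, and let $\gamma$ be the arc of that edge between $p$ and $q$. Then $\gamma$ is contained in the smallest closed disk with center $c_i$ that contains $p$ and $q$, i.e. the closed disk of center $c_i$ and radius $\max(\|p-c_i\|,\|q-c_i\|)$.
   Context: For a point $x\in\mathbb{R}^2$, $\delta_i(x)=\|x-c_i\|-\rho_i$ (Euclidean norm). The Apollonius cell of $D_i$ is $A_i=\{x\in\mathbb{R}^2 \mid \delta_i(x)\le\delta_j(x),\ j=1,\ldots,N\}$. The one-dimensional connected sets of points belonging to exactly two Apollonius cells are the Apollonius edges; points belonging to at least three cells are the Apollonius vertices. The bisector of $D_i,D_j$ is $B_{ij}=\{x\mid \delta_i(x)=\delta_j(x)\}$, so each edge of $A_i$ lies on a bisector $B_{ij}$. *)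

theory Defs
  imports "HOL-Analysis.Analysis"
begin

text \<open>The plane is modelled as the type complex (Euclidean norm).
  A closed disk is a pair (centre, radius); a finite family of disks is a
  finite set of such pairs.\<close>

type_synonym disk = "complex \<times> real"

definition delta :: "disk \<Rightarrow> complex \<Rightarrow> real" where
  "delta D x = norm (x - fst D) - snd D"

definition apollonius_cell :: "disk set \<Rightarrow> disk \<Rightarrow> complex set" where
  "apollonius_cell \<D> D = {x. \<forall>D'\<in>\<D>. delta D x \<le> delta D' x}"

definition cells_containing :: "disk set \<Rightarrow> complex \<Rightarrow> disk set" where
  "cells_containing \<D> x = {D\<in>\<D>. x \<in> apollonius_cell \<D> D}"

definition two_cell_points :: "disk set \<Rightarrow> complex set" where
  "two_cell_points \<D> = {x. card (cells_containing \<D> x) = 2}"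

definition apollonius_edge :: "disk set \<Rightarrow> complex set \<Rightarrow> bool" where
  "apollonius_edge \<D> E \<longleftrightarrow> E \<in> components (two_cell_points \<D>)"

end

theory Submission
  imports Defs
begin

lemma delta_cont: "continuous_on UNIV (delta D)"
  unfolding delta_def by (intro continuous_intros)

lemma arc_between:
  fixes g :: "real \<Rightarrow> complex" and f :: "complex \<Rightarrow> real"
  assumes "path g" "continuous_on (path_image g) f" "inj_on (f \<circ> g) {0..1}" "t \<in> {0..1}"
  shows "min (f (g 0)) (f (g 1)) \<le> f (g t) \<and> f (g t) \<le> max (f (g 0)) (f (g 1))"
proof -
  define h where "h = f \<circ> g"
  have hc: "continuous_on {0..1} h" using assms(1,2) unfolding path_def path_image_def h_def
    by (intro continuous_on_compose) auto
  have sub: "continuous_on {a..b} h" if "0 \<le> a" "b \<le> 1" for a b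
    using continuous_on_subset[OF hc] that by auto
  have inj: "inj_on h {0..1}" using assms(3) h_def by simp
  have t: "0 \<le> t" "t \<le> 1" using assms(4) by auto
  show ?thesis
  proof (rule ccontr)
    assume "\<not> ?thesis"
    then have "h t < min (h 0) (h 1) \<or> h t > max (h 0) (h 1)" by (auto simp: h_def)
    then show False
    proof
      assume lt: "h t < min (h 0) (h 1)"
      define y where "y = (h t + min (h 0) (h 1))/2"
      obtain t1 where t1: "0 \<le> t1" "t1 \<le> t" "h t1 = y"
        using IVT2'[of h t y 0] sub[of 0 t] t lt unfolding y_def by force
      obtain t2 where t2: "t \<le> t2" "t2 \<le> 1" "h t2 = y"
        using IVT'[of h t y 1] sub[of t 1] t lt unfolding y_def by force
      have "t1 \<noteq> t" "t2 \<noteq> t" using t1 t2 lt unfolding y_def by auto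
      then have "t1 \<noteq> t2" using t1 t2 by auto
      then show False using inj t1 t2 t unfolding inj_on_def by force
    next
      assume lt: "h t > max (h 0) (h 1)"
      define y where "y = (h t + max (h 0) (h 1))/2"
      obtain t1 where t1: "0 \<le> t1" "t1 \<le> t" "h t1 = y"
        using IVT'[of h 0 y t] sub[of 0 t] t lt unfolding y_def by force
      obtain t2 where t2: "t \<le> t2" "t2 \<le> 1" "h t2 = y"
        using IVT2'[of h 1 y t] sub[of t 1] t lt unfolding y_def by force
      have "t1 \<noteq> t" "t2 \<noteq> t" using t1 t2 lt unfolding y_def by auto
      then have "t1 \<noteq> t2" using t1 t2 by auto
      then show False using inj t1 t2 t unfolding inj_on_def by force
    qed
  qed
qed

lemma key_ineq:
  fixes L d r1 r2 k :: real
  assumes "L > 0" "\<bar>d\<bar> < L" "r1 > r2" "r2 \<ge> 0" "k = (L^2 - d^2)/2"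
    and "(r2 * d + k)^2 \<le> r2^2 * L^2"
  shows "r1^2 * L^2 - (r1 * d + k)^2 > r2^2 * L^2 - (r2 * d + k)^2"
proof -
  have "\<bar>r2 * d + k\<bar> \<le> \<bar>r2 * L\<bar>" unfolding abs_le_square_iff
    using assms(6) by (simp add: power_mult_distrib)
  then have "r2 * d + k \<le> r2 * L" using assms(1,4) by simp
  then have "(L + d) / 2 * (L - d) \<le> r2 * (L - d)" using assms(5) by (simp add: algebra_simps power2_eq_square)
  moreover have "L - d > 0" using assms(2) by simp
  ultimately have "r2 \<ge> (L + d)/2" by (meson mult_right_le_imp_le)
  then have "L + d \<le> 2 * r2" by simp
  then have p: "r1 + r2 - d > 0" using assms(1,3) by simp
  have "r1^2 * L^2 - (r1 * d + k)^2 - (r2^2 * L^2 - (r2 * d + k)^2)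
     = (r1 - r2) * (L^2 - d^2) * (r1 + r2 - d)"
  proof -
    have "L^2 - d^2 = 2*k" using assms(5) by simp
    then show ?thesis by (simp add: power2_eq_square algebra_simps)
  qed
  moreover have "(r1 - r2) * (L^2 - d^2) * (r1 + r2 - d) > 0"
  proof -
    have "\<not> \<bar>L\<bar> \<le> \<bar>d\<bar>" using assms(1,2) by simp
    then have "\<not> L^2 \<le> d^2" unfolding abs_le_square_iff .
    then have "L^2 - d^2 > 0" by simp
    then show ?thesis using p assms(3) by simp
  qed
  ultimately show ?thesis by linarith
qed

lemma cells_two:
  assumes "card (cells_containing \<D> y) = 2" "Di \<in> cells_containing \<D> y"
    "D \<in> cells_containing \<D> y" "D \<noteq> Di"
  shows "cells_containing \<D> y = {Di, D}"
proof -
  have fin: "finite (cells_containing \<D> y)" using assms(1) card.infinite by fastforce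
  have "{Di, D} \<subseteq> cells_containing \<D> y" using assms by auto
  moreover have "card {Di, D} = 2" using assms(4) by simp
  ultimately show ?thesis using card_subset_eq[OF fin] assms(1) by metis
qed

lemma edge_bisector:
  assumes "finite \<D>" "Di \<in> \<D>" "apollonius_edge \<D> E"
    and "E \<subseteq> apollonius_cell \<D> Di" and "p \<in> E"
  shows "\<exists>D\<in>\<D>. D \<noteq> Di \<and> (\<forall>x\<in>E. delta D x = delta Di x)"
proof -
  have Ecomp: "E \<in> components (two_cell_points \<D>)" using assms(3) unfolding apollonius_edge_def .
  have conn: "connected E" using in_components_connected[OF Ecomp] .
  have E2: "\<And>y. y \<in> E \<Longrightarrow> card (cells_containing \<D> y) = 2"
    using in_components_subset[OF Ecomp] unfolding two_cell_points_def by auto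
  have EDi: "\<And>y. y \<in> E \<Longrightarrow> Di \<in> cells_containing \<D> y"
    using assms(2,4) unfolding cells_containing_def by auto
  obtain D where D: "D \<in> cells_containing \<D> p" "D \<noteq> Di"
    using E2[OF assms(5)] EDi[OF assms(5)] unfolding card_2_iff by (metis insert_iff)
  have DD: "D \<in> \<D>" using D unfolding cells_containing_def by auto
  define Op where "Op = (\<Inter>D''\<in>\<D> - {Di, D}. {y. delta Di y < delta D'' y})"
  define Z where "Z = {y. delta D y = delta Di y}"
  have oOp: "open Op" unfolding Op_def using assms(1)
    by (intro open_INT ballI open_Collect_less delta_cont) auto
  have oZ: "open (- Z)" unfolding Z_def
    using open_Collect_neq[OF delta_cont delta_cont, of D Di] by (simp add: Collect_neg_eq)
  have inZ: "y \<in> Z" if yE: "y \<in> E" and yO: "y \<in> Op" for y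
  proof -
    obtain D2 where D2: "D2 \<in> cells_containing \<D> y" "D2 \<noteq> Di"
      using E2[OF yE] EDi[OF yE] unfolding card_2_iff by (metis insert_iff)
    have "D2 = D"
    proof (rule ccontr)
      assume "D2 \<noteq> D"
      then have "D2 \<in> \<D> - {Di, D}" using D2 unfolding cells_containing_def by auto
      then have "delta Di y < delta D2 y" using yO unfolding Op_def by auto
      moreover have "delta D2 y \<le> delta Di y"
        using D2 assms(2) unfolding cells_containing_def apollonius_cell_def by auto
      ultimately show False by simp
    qed
    then have "delta D y \<le> delta Di y" "delta Di y \<le> delta D y"
      using D2 assms(2) DD yE assms(4) unfolding cells_containing_def apollonius_cell_def by auto
    then show ?thesis unfolding Z_def by simp
  qed
  have inOp: "y \<in> Op" if yE: "y \<in> E" and yZ: "y \<in> Z" for y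
  proof -
    have "y \<in> apollonius_cell \<D> D" using yE yZ assms(4) unfolding Z_def apollonius_cell_def by auto
    then have "D \<in> cells_containing \<D> y" using DD unfolding cells_containing_def by auto
    then have cy: "cells_containing \<D> y = {Di, D}" using cells_two E2 EDi yE D(2) by blast
    show ?thesis unfolding Op_def
    proof (intro InterI, clarsimp)
      fix D'' assume D'': "D'' \<in> \<D>" "D'' \<noteq> Di" "D'' \<noteq> D"
      then have "D'' \<notin> cells_containing \<D> y" using cy by auto
      then have "y \<notin> apollonius_cell \<D> D''" using D'' unfolding cells_containing_def by auto
      then obtain D3 where "D3 \<in> \<D>" "delta D3 y < delta D'' y"
        unfolding apollonius_cell_def by (auto simp: not_le)
      moreover have "delta Di y \<le> delta D3 y" using \<open>D3 \<in> \<D>\<close> yE assms(4)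
        unfolding apollonius_cell_def by auto
      ultimately show "delta Di y < delta D'' y" by simp
    qed
  qed
  have pZ: "p \<in> Z" using D assms(2,4,5) unfolding Z_def cells_containing_def apollonius_cell_def
    by (auto intro: antisym)
  have "Op \<inter> E = {} \<or> - Z \<inter> E = {}"
    by (rule connectedD[OF conn oOp oZ]) (use inZ inOp in auto)
  moreover have "Op \<inter> E \<noteq> {}" using inOp[OF assms(5) pZ] assms(5) by auto
  ultimately have "\<forall>x\<in>E. x \<in> Z" by auto
  then show ?thesis using DD D(2) unfolding Z_def by auto
qed

lemma norm_diff_sq:
  fixes z v :: complex
  shows "(cmod (z - v))^2 = (cmod z)^2 - 2 * Re (z * cnj v) + (cmod v)^2"
  unfolding cmod_power2 by (simp add: power2_eq_square algebra_simps)

lemma geom: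
  fixes E :: "complex set" and p q :: complex and \<gamma> :: "real \<Rightarrow> complex"
  assumes "D \<noteq> Di" "\<forall>x\<in>E. delta D x = delta Di x"
    and "p \<in> E" "arc \<gamma>" "pathstart \<gamma> = p" "pathfinish \<gamma> = q" "path_image \<gamma> \<subseteq> E"
  shows "path_image \<gamma> \<subseteq> cball (fst Di) (max (norm (p - fst Di)) (norm (q - fst Di)))"
proof -
  define c where "c = fst Di"
  define v where "v = fst D - c"
  define L where "L = cmod v"
  define d where "d = snd Di - snd D"
  define k where "k = (L^2 - d^2)/2"
  define w where "w = (\<lambda>x. (x - c) * cnj v)"
  define a where "a = (\<lambda>x. Re (w x))"
  define b where "b = (\<lambda>x. Im (w x))"
  define r where "r = (\<lambda>x. cmod (x - c))"
  have bis: "cmod (x - fst D) = r x - d" if "x \<in> E" for x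
    using assms(2) that unfolding delta_def r_def d_def c_def by auto
  have "v \<noteq> 0"
  proof
    assume "v = 0"
    then have "fst D = fst Di" unfolding v_def c_def by simp
    moreover then have "snd D = snd Di" using assms(2,3) unfolding delta_def by auto
    ultimately show False using assms(1) by (simp add: prod_eq_iff)
  qed
  then have Lpos: "L > 0" unfolding L_def by simp
  have dL: "\<bar>d\<bar> \<le> L"
  proof -
    have "\<bar>cmod (p - c) - cmod (p - fst D)\<bar> \<le> cmod ((p - c) - (p - fst D))"
      by (rule norm_triangle_ineq3)
    moreover have "(p - c) - (p - fst D) = v" unfolding v_def by simp
    ultimately show ?thesis using bis[OF assms(3)] unfolding L_def r_def by (simp add: norm_minus_commute)
  qed
  have F1: "a x = r x * d + k" if "x \<in> E" for x
  proof -
    have "x - fst D = (x - c) - v" unfolding v_def by simp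
    then have e: "cmod ((x - c) - v) = r x - d" using bis[OF that] by metis
    have "(r x - d)^2 = (cmod ((x - c) - v))^2" by (simp only: e)
    also have "\<dots> = (r x)^2 - 2 * a x + L^2"
      unfolding norm_diff_sq a_def w_def r_def L_def by simp
    finally have "(r x - d)^2 = (r x)^2 - 2 * a x + L^2" .
    then show ?thesis unfolding k_def by (simp add: power2_eq_square field_simps)
  qed
  have F2: "(a x)^2 + (b x)^2 = (r x)^2 * L^2" for x
  proof -
    have "cmod (w x) = r x * L" unfolding w_def r_def L_def by (simp add: norm_mult)
    then show ?thesis using cmod_power2[of "w x"] unfolding a_def b_def by (simp add: power_mult_distrib)
  qed
  have winj: "x = y" if "a x = a y" "b x = b y" for x y
  proof -
    have "w x = w y" using that unfolding a_def b_def by (simp add: complex_eqI)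
    then show ?thesis using \<open>v \<noteq> 0\<close> unfolding w_def by simp
  qed
  have r0: "r x \<ge> 0" for x unfolding r_def by simp
  have path: "path \<gamma>" using assms(4) by (rule arc_imp_path)
  have ginj: "inj_on \<gamma> {0..1}" using assms(4) unfolding arc_def by simp
  have g0: "\<gamma> 0 = p" and g1: "\<gamma> 1 = q" using assms(5,6) unfolding pathstart_def pathfinish_def by auto
  have qE: "q \<in> E" using assms(7) g1 unfolding path_image_def by force
  have ca: "continuous_on (path_image \<gamma>) a" unfolding a_def w_def by (intro continuous_intros)
  have cb: "continuous_on (path_image \<gamma>) b" unfolding b_def w_def by (intro continuous_intros)
  have inj_comp: "inj_on (f \<circ> \<gamma>) {0..1}" if "inj_on f E" for f
    using comp_inj_on[OF ginj, of f] inj_on_subset[OF that assms(7)] unfolding path_image_def by simp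
  have bound: "r x \<le> max (r p) (r q)" if xg: "x \<in> path_image \<gamma>" for x
  proof -
    obtain t where t: "t \<in> {0..1}" "x = \<gamma> t" using xg unfolding path_image_def by auto
    have xE: "x \<in> E" using xg assms(7) by auto
    show ?thesis
    proof (cases "\<bar>d\<bar> < L")
      case True
      have bsq: "(b y)^2 = (r y)^2 * L^2 - (r y * d + k)^2" if "y \<in> E" for y
        using F1[OF that] F2[of y] by simp
      have pre: "(r y * d + k)^2 \<le> (r y)^2 * L^2" if "y \<in> E" for y
        using bsq[OF that] by (metis diff_ge_0_iff_ge zero_le_power2)
      have mono: "(b y)^2 > (b z)^2" if "y \<in> E" "z \<in> E" "r y > r z" for y z
        using key_ineq[OF Lpos True that(3) r0 k_def pre[OF that(2)]] bsq[OF that(1)] bsq[OF that(2)]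
        by simp
      have "inj_on b E"
      proof (rule inj_onI)
        fix y z assume yz: "y \<in> E" "z \<in> E" "b y = b z"
        have "r y = r z" using mono[OF yz(1,2)] mono[OF yz(2,1)] yz(3) by (metis linorder_neqE_linordered_idom less_irrefl)
        then have "a y = a z" using F1 yz by simp
        then show "y = z" using winj yz(3) by simp
      qed
      from arc_between[OF path cb inj_comp[OF this] t(1)]
      have "min (b p) (b q) \<le> b x \<and> b x \<le> max (b p) (b q)" using g0 g1 t(2) by simp
      then have "\<bar>b x\<bar> \<le> \<bar>b p\<bar> \<or> \<bar>b x\<bar> \<le> \<bar>b q\<bar>" by (auto simp: min_def max_def split: if_splits)
      then have "(b x)^2 \<le> (b p)^2 \<or> (b x)^2 \<le> (b q)^2" unfolding abs_le_square_iff .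
      then show ?thesis using mono[OF xE assms(3)] mono[OF xE qE] by force
    next
      case False
      then have dL2: "\<bar>d\<bar> = L" using dL by simp
      then have k0: "k = 0" unfolding k_def by (metis power2_abs diff_self div_0)
      have dnz: "d \<noteq> 0" using dL2 Lpos by auto
      have ar: "a y = r y * d" if "y \<in> E" for y using F1[OF that] k0 by simp
      have b0: "b y = 0" if "y \<in> E" for y
      proof -
        have "(a y)^2 = (r y)^2 * L^2" using ar[OF that] dL2 by (metis power2_abs power_mult_distrib)
        then show ?thesis using F2[of y] by simp
      qed
      have "inj_on a E"
      proof (rule inj_onI)
        fix y z assume yz: "y \<in> E" "z \<in> E" "a y = a z"
        then show "y = z" using winj b0 by simp
      qed
      from arc_between[OF path ca inj_comp[OF this] t(1)]
      have "min (a p) (a q) \<le> a x \<and> a x \<le> max (a p) (a q)" using g0 g1 t(2) by simp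
      then have h: "min (r p * d) (r q * d) \<le> r x * d \<and> r x * d \<le> max (r p * d) (r q * d)"
        using ar xE assms(3) qE by simp
      show ?thesis
      proof (cases "d > 0")
        case True
        then show ?thesis using h by (auto simp: min_def max_def split: if_splits)
      next
        case False
        then have "d < 0" using dnz by simp
        then show ?thesis using h by (auto simp: min_def max_def split: if_splits)
      qed
    qed
  qed
  show ?thesis
  proof
    fix x assume "x \<in> path_image \<gamma>"
    from bound[OF this] show "x \<in> cball (fst Di) (max (norm (p - fst Di)) (norm (q - fst Di)))"
      unfolding r_def c_def by (simp add: dist_norm norm_minus_commute)
  qed
qed

theorem corollary2:
  fixes \<D> :: "disk set" and Di :: disk and E :: "complex set"
    and p q :: complex and \<gamma> :: "real \<Rightarrow> complex"
  assumes "finite \<D>"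
    and "\<forall>D\<in>\<D>. snd D \<ge> 0"
    and "Di \<in> \<D>"
    and "apollonius_edge \<D> E"
    and "E \<subseteq> apollonius_cell \<D> Di"
    and "p \<in> E" and "q \<in> E"
    and "arc \<gamma>" and "pathstart \<gamma> = p" and "pathfinish \<gamma> = q"
    and "path_image \<gamma> \<subseteq> E"
  shows "path_image \<gamma> \<subseteq> cball (fst Di) (max (norm (p - fst Di)) (norm (q - fst Di)))"
proof -
  obtain D where "D \<in> \<D>" "D \<noteq> Di" "\<forall>x\<in>E. delta D x = delta Di x"
    using edge_bisector[OF assms(1,3,4,5,6)] by blast
  then show ?thesis using geom[OF _ _ assms(6,8,9,10,11)] by blast
qed

end
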